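(* Let $\Omega\subseteq\mathbb{R}^n$ be open, let $f_1,\dots,f_m:\Omega\to\mathbb{R}$ be differentiable, and let $W\subseteq\Omega$ be convex and bounded. Suppose there is $L\ge 0$ such that $$\|\nabla f_i(y)-\nabla f_i(z)\|\le L\|y-z\|\qquad\text{for all }y,z\in W,\ i=1,\dots,m,$$ and set $M=\sup_{i=1,\dots,m,\ x\in W}\|\nabla f_i(x)\|$ (which is finite). Then for all $y,z\in W$: 1. $\|\Lambda f(y)-\Lambda f(z)\|\le\sqrt{2LM}\,\|y-z\|^{1/2}$, so $x\mapsto\Lambda f(x)$ is Hölder continuous on $W$ with exponent $1/2$; 2. $\big|\,\|\Lambda f(y)\|-\|\Lambda f(z)\|\,\big|\le L\|y-z\|$, so $x\mapsto\|\Lambda f(x)\|$ is Lipschitz continuous on $W$.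
   Context: $\mathbb{R}^n$ carries the standard inner product $\langle\cdot,\cdot\rangle$ and Euclidean norm $\|\cdot\|$. For $x\in\Omega$, the (multiobjective) steepest descent direction is $$\Lambda f(x):=\operatorname{argmin}_{v\in\mathbb{R}^n}\Big(\max_{i=1,\dots,m}\langle v,\nabla f_i(x)\rangle+\tfrac12\|v\|^2\Big),$$ (the minimizer is unique since the objective is strongly convex). *)

theory Defs
  imports "HOL-Analysis.Analysis"
begin

definition grad :: "('a::euclidean_space \<Rightarrow> real) \<Rightarrow> 'a \<Rightarrow> 'a" where
  "grad g x = (THE v. (g has_derivative (\<lambda>h. v \<bullet> h)) (at x))"

definition sd_obj :: "(nat \<Rightarrow> 'a::euclidean_space \<Rightarrow> real) \<Rightarrow> nat \<Rightarrow> 'a \<Rightarrow> 'a \<Rightarrow> real" where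
  "sd_obj f m x v = (MAX i\<in>{1..m}. v \<bullet> grad (f i) x) + (1/2) * (norm v)\<^sup>2"

definition steepest_dir :: "(nat \<Rightarrow> 'a::euclidean_space \<Rightarrow> real) \<Rightarrow> nat \<Rightarrow> 'a \<Rightarrow> 'a" where
  "steepest_dir f m x = (THE v. \<forall>w. sd_obj f m x v \<le> sd_obj f m x w)"

end

theory Submission imports Defs begin

definition hmax :: "nat \<Rightarrow> (nat \<Rightarrow> 'a::euclidean_space) \<Rightarrow> 'a \<Rightarrow> real" where
  "hmax m G w = (MAX i\<in>{1..m}. w \<bullet> G i)"

definition phi :: "nat \<Rightarrow> (nat \<Rightarrow> 'a::euclidean_space) \<Rightarrow> 'a \<Rightarrow> real" where
  "phi m G v = hmax m G v + 1/2 * (norm v)\<^sup>2"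

lemma sd_obj_eq: "sd_obj f m x = phi m (\<lambda>i. grad (f i) x)"
  by (auto simp: sd_obj_def phi_def hmax_def)

lemma hmax_ge: "i \<in> {1..m} \<Longrightarrow> w \<bullet> G i \<le> hmax m G w"
  unfolding hmax_def by (rule Max_ge) auto

lemma hmax_le: "m \<ge> 1 \<Longrightarrow> (\<And>i. i \<in> {1..m} \<Longrightarrow> w \<bullet> G i \<le> c) \<Longrightarrow> hmax m G w \<le> c"
  unfolding hmax_def by (subst Max_le_iff) auto

lemma hmax_in: "m \<ge> 1 \<Longrightarrow> \<exists>i\<in>{1..m}. hmax m G w = w \<bullet> G i"
proof -
  assume "m \<ge> 1"
  then have "(MAX i\<in>{1..m}. w \<bullet> G i) \<in> (\<lambda>i. w \<bullet> G i) ` {1..m}"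
    by (intro Max_in) auto
  then show ?thesis unfolding hmax_def by auto
qed

lemma hmax_convex:
  assumes "m \<ge> 1" "0 \<le> t" "t \<le> 1"
  shows "hmax m G ((1-t) *\<^sub>R v + t *\<^sub>R w) \<le> (1-t) * hmax m G v + t * hmax m G w"
proof (rule hmax_le[OF assms(1)])
  fix i assume i: "i \<in> {1..m}"
  have "((1-t) *\<^sub>R v + t *\<^sub>R w) \<bullet> G i = (1-t) * (v \<bullet> G i) + t * (w \<bullet> G i)"
    by (simp add: inner_add_left)
  also have "\<dots> \<le> (1-t) * hmax m G v + t * hmax m G w"
    using hmax_ge[OF i, of v G] hmax_ge[OF i, of w G] assms
    by (intro add_mono mult_left_mono) auto
  finally show "((1-t) *\<^sub>R v + t *\<^sub>R w) \<bullet> G i \<le> (1-t) * hmax m G v + t * hmax m G w" .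
qed

lemma hmax_scale:
  assumes "m \<ge> 1" "0 \<le> s"
  shows "hmax m G (s *\<^sub>R v) = s * hmax m G v"
proof (rule antisym)
  show "hmax m G (s *\<^sub>R v) \<le> s * hmax m G v"
    using hmax_ge[of _ m v G] assms by (intro hmax_le) (auto intro: mult_left_mono)
  obtain i where i: "i \<in> {1..m}" "hmax m G v = v \<bullet> G i" using hmax_in[OF assms(1)] by blast
  show "s * hmax m G v \<le> hmax m G (s *\<^sub>R v)"
    using hmax_ge[OF i(1), of "s *\<^sub>R v" G] i(2) by simp
qed

lemma hmax_lip:
  assumes "m \<ge> 1" "\<And>i. i \<in> {1..m} \<Longrightarrow> norm (G i - H i) \<le> e"
  shows "hmax m G w \<le> hmax m H w + norm w * e"
proof (rule hmax_le[OF assms(1)])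
  fix i assume i: "i \<in> {1..m}"
  have "w \<bullet> G i = w \<bullet> H i + w \<bullet> (G i - H i)" by (simp add: inner_diff_right)
  also have "\<dots> \<le> hmax m H w + norm w * norm (G i - H i)"
    using hmax_ge[OF i] norm_cauchy_schwarz by (intro add_mono) auto
  also have "\<dots> \<le> hmax m H w + norm w * e"
    using assms(2)[OF i] by (simp add: mult_left_mono)
  finally show "w \<bullet> G i \<le> hmax m H w + norm w * e" .
qed

lemma hmax_cont:
  assumes "m \<ge> 1"
  shows "continuous_on UNIV (hmax m G)"
proof -
  define B where "B = (\<Sum>i\<in>{1..m}. norm (G i))"
  have B0: "B \<ge> 0" unfolding B_def by (intro sum_nonneg) auto
  have key: "hmax m G v \<le> hmax m G w + dist v w * B" for v w
  proof (rule hmax_le[OF assms])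
    fix i assume i: "i \<in> {1..m}"
    have nb: "norm (G i) \<le> B" unfolding B_def using i by (intro member_le_sum) auto
    have "v \<bullet> G i = w \<bullet> G i + (v - w) \<bullet> G i" by (simp add: inner_diff_left)
    also have "\<dots> \<le> hmax m G w + norm (v - w) * norm (G i)"
      using hmax_ge[OF i] norm_cauchy_schwarz by (intro add_mono) auto
    also have "\<dots> \<le> hmax m G w + dist v w * B"
      using nb by (simp add: dist_norm mult_left_mono)
    finally show "v \<bullet> G i \<le> hmax m G w + dist v w * B" .
  qed
  have "B-lipschitz_on UNIV (hmax m G)"
  proof (rule lipschitz_onI[OF _ B0])
    fix v w :: 'a
    show "dist (hmax m G v) (hmax m G w) \<le> B * dist v w"
      using key[of v w] key[of w v] by (simp add: dist_real_def dist_commute abs_le_iff algebra_simps)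
  qed
  then show ?thesis by (rule lipschitz_on_continuous_on)
qed

lemma phi_cont: "m \<ge> 1 \<Longrightarrow> continuous_on UNIV (phi m G)"
  unfolding phi_def[abs_def]
  by (intro continuous_intros hmax_cont) 

lemma var_ineq:
  assumes m: "m \<ge> 1" and opt: "\<And>w'. phi m G v \<le> phi m G w'"
  shows "hmax m G w - hmax m G v + v \<bullet> (w - v) \<ge> 0"
proof (rule ccontr)
  define A where "A = hmax m G w - hmax m G v + v \<bullet> (w - v)"
  define d where "d = w - v"
  assume "\<not> ?thesis"
  then have A: "A < 0" unfolding A_def by simp
  have "d \<noteq> 0" using A unfolding A_def d_def by auto
  then have nd: "(norm d)\<^sup>2 > 0" by simp
  define t where "t = min 1 (- A / (norm d)\<^sup>2)"
  have t0: "t > 0" using A nd unfolding t_def by (auto simp: field_simps)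
  have t1: "t \<le> 1" unfolding t_def by simp
  have tA: "t * (norm d)\<^sup>2 \<le> - A"
    using nd unfolding t_def by (simp add: min_def field_simps)
  have eq: "v + t *\<^sub>R d = (1-t) *\<^sub>R v + t *\<^sub>R w" unfolding d_def by (simp add: algebra_simps)
  have h: "hmax m G (v + t *\<^sub>R d) \<le> (1-t) * hmax m G v + t * hmax m G w"
    unfolding eq using t0 t1 by (intro hmax_convex[OF m]) auto
  have n: "(norm (v + t *\<^sub>R d))\<^sup>2 = (norm v)\<^sup>2 + 2 * t * (v \<bullet> d) + t\<^sup>2 * (norm d)\<^sup>2"
    unfolding power2_norm_eq_inner by (simp add: inner_add_left inner_add_right inner_commute power2_eq_square algebra_simps)
  have "phi m G v \<le> phi m G (v + t *\<^sub>R d)" by (rule opt)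
  then have 1: "hmax m G v + (norm v)\<^sup>2/2 \<le> hmax m G (v + t *\<^sub>R d) + (norm (v + t *\<^sub>R d))\<^sup>2/2"
    unfolding phi_def by simp
  have "t * A = t * hmax m G w - t * hmax m G v + t * (v \<bullet> d)"
    unfolding A_def d_def by (simp add: algebra_simps)
  then have "0 \<le> t * A + t\<^sup>2 * (norm d)\<^sup>2 / 2"
  proof -
    have 2: "(norm (v + t *\<^sub>R d))\<^sup>2/2 = (norm v)\<^sup>2/2 + t * (v \<bullet> d) + t\<^sup>2 * (norm d)\<^sup>2 / 2"
      using n by (simp add: field_simps)
    have 3: "(1 - t) * hmax m G v = hmax m G v - t * hmax m G v" by (simp add: algebra_simps)
    show ?thesis using 1 2 3 h \<open>t * A = _\<close> by linarith
  qed
  moreover have "t\<^sup>2 * (norm d)\<^sup>2 / 2 \<le> t * (- A) / 2"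
    using mult_left_mono[OF tA, of t] t0 by (simp add: power2_eq_square algebra_simps)
  moreover have "t * A < 0" using t0 A by (simp add: mult_pos_neg)
  ultimately show False by linarith
qed

lemma exists_min:
  assumes m: "m \<ge> 1"
  shows "\<exists>v. \<forall>w. phi m G v \<le> phi m G w"
proof -
  define R where "R = 2 * norm (G 1)"
  have "\<exists>x\<in>cball 0 R. \<forall>y\<in>cball 0 R. phi m G x \<le> phi m G y"
    using phi_cont[OF m] unfolding R_def
    by (intro continuous_attains_inf) (auto intro: continuous_on_subset)
  then obtain x where x: "x \<in> cball 0 R" "\<And>y. y \<in> cball 0 R \<Longrightarrow> phi m G x \<le> phi m G y" by blast
  have p0: "phi m G 0 = 0" using hmax_scale[OF m, of 0 G 0] unfolding phi_def by simp
  have "0 \<in> cball (0::'a) R" unfolding R_def by simp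
  then have x0: "phi m G x \<le> 0" using x(2) p0 by fastforce
  show ?thesis
  proof (intro exI allI)
    fix w
    show "phi m G x \<le> phi m G w"
    proof (cases "w \<in> cball 0 R")
      case True then show ?thesis using x by blast
    next
      case False
      then have wR: "norm w > R" by simp
      have "w \<bullet> G 1 \<le> hmax m G w" using m by (intro hmax_ge) auto
      moreover have "- (norm w * norm (G 1)) \<le> w \<bullet> G 1"
        using norm_cauchy_schwarz[of "-w" "G 1"] by simp
      ultimately have "phi m G w \<ge> norm w * (norm w / 2 - norm (G 1))"
        unfolding phi_def by (simp add: power2_eq_square algebra_simps)
      moreover have "norm w * (norm w / 2 - norm (G 1)) > 0"
        using wR unfolding R_def by (intro mult_pos_pos) auto
      ultimately show ?thesis using x0 by linarith
    qed
  qed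
qed

lemma unique_min:
  assumes m: "m \<ge> 1" and o1: "\<And>w. phi m G v1 \<le> phi m G w" and o2: "\<And>w. phi m G v2 \<le> phi m G w"
  shows "v1 = v2"
proof -
  have "hmax m G v2 - hmax m G v1 + v1 \<bullet> (v2 - v1) \<ge> 0" by (rule var_ineq[OF m o1])
  moreover have "hmax m G v1 - hmax m G v2 + v2 \<bullet> (v1 - v2) \<ge> 0" by (rule var_ineq[OF m o2])
  ultimately have "(v1 - v2) \<bullet> (v1 - v2) \<le> 0"
    by (simp add: inner_diff_left inner_diff_right inner_commute algebra_simps)
  then have "(v1 - v2) \<bullet> (v1 - v2) = 0" using inner_ge_zero[of "v1 - v2"] by linarith
  then show ?thesis by simp
qed

lemma sd_char:
  assumes m: "m \<ge> 1"
  shows "\<forall>w. phi m (\<lambda>i. grad (f i) x) (steepest_dir f m x) \<le> phi m (\<lambda>i. grad (f i) x) w"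
proof -
  obtain v where v: "\<forall>w. phi m (\<lambda>i. grad (f i) x) v \<le> phi m (\<lambda>i. grad (f i) x) w"
    using exists_min[OF m] by blast
  have "steepest_dir f m x = v"
    unfolding steepest_dir_def sd_obj_eq
    by (rule the_equality) (use v unique_min[OF m] in blast)+
  then show ?thesis using v by simp
qed

lemma hmax_opt:
  assumes m: "m \<ge> 1" and opt: "\<And>w. phi m G v \<le> phi m G w"
  shows "hmax m G v = - (norm v)\<^sup>2"
proof -
  have a: "hmax m G 0 - hmax m G v + v \<bullet> (0 - v) \<ge> 0" by (rule var_ineq[OF m opt])
  have b: "hmax m G (2 *\<^sub>R v) - hmax m G v + v \<bullet> (2 *\<^sub>R v - v) \<ge> 0" by (rule var_ineq[OF m opt])
  have z: "hmax m G 0 = 0" using hmax_scale[OF m, of 0 G 0] by simp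
  have t: "hmax m G (2 *\<^sub>R v) = 2 * hmax m G v" using hmax_scale[OF m, of 2 G v] by simp
  show ?thesis using a b z t by (simp add: power2_norm_eq_inner algebra_simps)
qed

lemma norm_opt:
  assumes m: "m \<ge> 1" and opt: "\<And>w. phi m G v \<le> phi m G w"
  shows "norm v \<le> norm (G 1)"
proof -
  have "(norm v)\<^sup>2 = - hmax m G v" using hmax_opt[OF m opt] by simp
  also have "\<dots> \<le> - (v \<bullet> G 1)" using m hmax_ge[of 1 m v G] by simp
  also have "\<dots> \<le> norm v * norm (G 1)" using norm_cauchy_schwarz[of "-v" "G 1"] by simp
  finally have "norm v * norm v \<le> norm v * norm (G 1)" by (simp add: power2_eq_square)
  then show ?thesis
    by (cases "norm v = 0") (auto simp: mult_le_cancel_left)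
qed

lemma holder_core:
  assumes m: "m \<ge> 1" and e: "\<And>i. i \<in> {1..m} \<Longrightarrow> norm (G i - H i) \<le> e"
    and ou: "\<And>w. phi m G u \<le> phi m G w" and ov: "\<And>w. phi m H v \<le> phi m H w"
  shows "(norm (u - v))\<^sup>2 \<le> (norm u + norm v) * e"
proof -
  have e': "\<And>i. i \<in> {1..m} \<Longrightarrow> norm (H i - G i) \<le> e" using e by (simp add: norm_minus_commute)
  have a: "hmax m G v - hmax m G u + u \<bullet> (v - u) \<ge> 0" by (rule var_ineq[OF m ou])
  have b: "hmax m H u - hmax m H v + v \<bullet> (u - v) \<ge> 0" by (rule var_ineq[OF m ov])
  have c: "hmax m G v \<le> hmax m H v + norm v * e" by (rule hmax_lip[OF m e])
  have d: "hmax m H u \<le> hmax m G u + norm u * e" by (rule hmax_lip[OF m e'])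
  have "(norm (u - v))\<^sup>2 = - (u \<bullet> (v - u) + v \<bullet> (u - v))"
    by (simp add: power2_norm_eq_inner inner_diff_left inner_diff_right inner_commute algebra_simps)
  then show ?thesis using a b c d by (simp add: algebra_simps)
qed

lemma normlip_core:
  assumes m: "m \<ge> 1" and e: "\<And>i. i \<in> {1..m} \<Longrightarrow> norm (G i - H i) \<le> e" and e0: "e \<ge> 0"
    and ou: "\<And>w. phi m G u \<le> phi m G w" and ov: "\<And>w. phi m H v \<le> phi m H w"
  shows "norm u - norm v \<le> e"
proof (cases "norm u \<le> e")
  case True then show ?thesis using norm_ge_zero[of v] by linarith
next
  case False
  define a where "a = norm u"
  have ae: "a > e" using False unfolding a_def by simp
  then have a0: "a > 0" using e0 by simp
  define s where "s = (a - e) / a"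
  have s0: "s \<ge> 0" using ae a0 unfolding s_def by simp
  have e': "\<And>i. i \<in> {1..m} \<Longrightarrow> norm (H i - G i) \<le> e" using e by (simp add: norm_minus_commute)
  have hu: "hmax m G u = - a\<^sup>2" using hmax_opt[OF m ou] unfolding a_def .
  have hv: "hmax m H v = - (norm v)\<^sup>2" by (rule hmax_opt[OF m ov])
  have d: "hmax m H u \<le> hmax m G u + a * e" using hmax_lip[OF m e'] unfolding a_def .
  have "phi m H v \<le> phi m H (s *\<^sub>R u)" by (rule ov)
  then have "- (norm v)\<^sup>2 / 2 \<le> s * hmax m H u + s\<^sup>2 * a\<^sup>2 / 2"
    unfolding phi_def hv hmax_scale[OF m s0] using s0 by (simp add: a_def power_mult_distrib)
  also have "\<dots> \<le> s * (- a\<^sup>2 + a * e) + s\<^sup>2 * a\<^sup>2 / 2"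
    using d hu s0 by (simp add: mult_left_mono)
  also have "\<dots> = - (a - e)\<^sup>2 / 2"
    using a0 unfolding s_def by (simp add: field_simps power2_eq_square)
  finally have "(a - e)\<^sup>2 \<le> (norm v)\<^sup>2" by simp
  then have "a - e \<le> norm v" using ae by (simp add: abs_le_square_iff[symmetric] power2_le_iff_abs_le)
  then show ?thesis unfolding a_def by simp
qed
theorem theorem3p1:
  fixes f :: "nat \<Rightarrow> 'a::euclidean_space \<Rightarrow> real"
    and m :: nat and \<Omega> W :: "'a set" and L :: real
  assumes "m \<ge> 1"
    and "open \<Omega>"
    and "\<And>i x. i \<in> {1..m} \<Longrightarrow> x \<in> \<Omega> \<Longrightarrow> f i differentiable (at x)"
    and "W \<subseteq> \<Omega>" and "convex W" and "bounded W"
    and "L \<ge> 0"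
    and "\<And>i y z. i \<in> {1..m} \<Longrightarrow> y \<in> W \<Longrightarrow> z \<in> W \<Longrightarrow>
           norm (grad (f i) y - grad (f i) z) \<le> L * norm (y - z)"
  defines "M \<equiv> Sup {norm (grad (f i) x) | i x. i \<in> {1..m} \<and> x \<in> W}"
  shows "\<forall>y\<in>W. \<forall>z\<in>W.
           norm (steepest_dir f m y - steepest_dir f m z) \<le> sqrt (2 * L * M) * sqrt (norm (y - z))
         \<and> \<bar>norm (steepest_dir f m y) - norm (steepest_dir f m z)\<bar> \<le> L * norm (y - z)"
proof (intro ballI)
  fix y z assume y: "y \<in> W" and z: "z \<in> W"
  note m = assms(1)
  define S where "S = {norm (grad (f i) x) | i x. i \<in> {1..m} \<and> x \<in> W}"
  obtain B where B: "\<And>x. x \<in> W \<Longrightarrow> norm x \<le> B" using assms(6) unfolding bounded_iff by blast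
  have bdd: "bdd_above S"
  proof (rule bdd_aboveI)
    fix s assume "s \<in> S"
    then obtain i x where s: "s = norm (grad (f i) x)" "i \<in> {1..m}" "x \<in> W" unfolding S_def by blast
    have "norm (grad (f i) x) \<le> norm (grad (f i) y) + norm (grad (f i) x - grad (f i) y)"
      by (metis add_diff_cancel_left' norm_triangle_ineq diff_add_cancel)
    also have "\<dots> \<le> (\<Sum>j\<in>{1..m}. norm (grad (f j) y)) + L * (B + B)"
    proof (rule add_mono)
      show "norm (grad (f i) y) \<le> (\<Sum>j\<in>{1..m}. norm (grad (f j) y))"
        using s(2) by (intro member_le_sum) auto
      have "norm (x - y) \<le> B + B" using B[OF s(3)] B[OF y] norm_triangle_ineq4[of x y] by linarith
      then have "L * norm (x - y) \<le> L * (B + B)" using assms(7) by (rule mult_left_mono)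
      then show "norm (grad (f i) x - grad (f i) y) \<le> L * (B + B)"
        using assms(8)[OF s(2,3) y] by linarith
    qed
    finally show "s \<le> (\<Sum>j\<in>{1..m}. norm (grad (f j) y)) + L * (B + B)" using s(1) by simp
  qed
  have Mx: "norm (grad (f 1) x) \<le> M" if "x \<in> W" for x
    unfolding M_def S_def[symmetric] using bdd that m by (intro cSup_upper) (auto simp: S_def)
  define G where "G = (\<lambda>i. grad (f i) y)"
  define H where "H = (\<lambda>i. grad (f i) z)"
  define u where "u = steepest_dir f m y"
  define v where "v = steepest_dir f m z"
  have ou: "\<And>w. phi m G u \<le> phi m G w" using sd_char[OF m, of f y] unfolding G_def u_def by blast
  have ov: "\<And>w. phi m H v \<le> phi m H w" using sd_char[OF m, of f z] unfolding H_def v_def by blast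
  have e: "\<And>i. i \<in> {1..m} \<Longrightarrow> norm (G i - H i) \<le> L * norm (y - z)"
    unfolding G_def H_def using assms(8) y z by blast
  have e': "\<And>i. i \<in> {1..m} \<Longrightarrow> norm (H i - G i) \<le> L * norm (y - z)"
    using e by (simp add: norm_minus_commute)
  have e0: "L * norm (y - z) \<ge> 0" using assms(7) by simp
  have nu: "norm u \<le> M" using norm_opt[OF m ou] Mx[OF y] unfolding G_def by linarith
  have nv: "norm v \<le> M" using norm_opt[OF m ov] Mx[OF z] unfolding H_def by linarith
  have M0: "M \<ge> 0" using nu norm_ge_zero[of u] by linarith
  have "(norm (u - v))\<^sup>2 \<le> (norm u + norm v) * (L * norm (y - z))"
    by (rule holder_core[OF m e ou ov])
  also have "\<dots> \<le> (2 * M) * (L * norm (y - z))"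
    using nu nv e0 by (intro mult_right_mono) auto
  finally have sq: "(norm (u - v))\<^sup>2 \<le> 2 * L * M * norm (y - z)" by (simp add: algebra_simps)
  have "norm (u - v) = sqrt ((norm (u - v))\<^sup>2)" by simp
  also have "\<dots> \<le> sqrt (2 * L * M * norm (y - z))" using sq by (rule real_sqrt_le_mono)
  also have "\<dots> = sqrt (2 * L * M) * sqrt (norm (y - z))" by (simp add: real_sqrt_mult)
  finally have part1: "norm (u - v) \<le> sqrt (2 * L * M) * sqrt (norm (y - z))" .
  have a: "norm u - norm v \<le> L * norm (y - z)" by (rule normlip_core[OF m e e0 ou ov])
  have b: "norm v - norm u \<le> L * norm (y - z)" by (rule normlip_core[OF m e' e0 ov ou])
  show "norm (steepest_dir f m y - steepest_dir f m z) \<le> sqrt (2 * L * M) * sqrt (norm (y - z))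
         \<and> \<bar>norm (steepest_dir f m y) - norm (steepest_dir f m z)\<bar> \<le> L * norm (y - z)"
    using part1 a b unfolding u_def v_def by auto
qed

end
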